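(* If $(S,K,I)$ is a split graph and $C$ is an induced cycle in the factor graph $\Phi(S)$, then $|C|\leq 4$.
   Context: A split graph $(S,K,I)$ is a graph $S$ together with a fixed partition $V(S)=K\dot\cup I$, where $K$ is a clique and $I$ is an independent set. For a vertex $v$ of $S$, $N_v$ denotes its open neighborhood in $S$ and $d_v=|N_v|$; $\eta_{uv}=|N_u\cap N_v|$. The factor graph $\Phi(S)$ is the loopless multigraph with vertex set $I$ in which, for distinct $u,v\in I$, there is one edge joining $u$ and $v$ for each 2-switch of $S$ acting on $u$ and $v$ (a 2-switch replaces edges $ab,cd$ with $ac,bd$ when $ab,cd\in E(S)$ and $ac,bd\notin E(S)$); equivalently, the multiplicity of $uv$ is $\sigma_{uv}=(d_u-\eta_{uv})(d_v-\eta_{uv})$, and $u,v$ are adjacent iff $\sigma_{uv}>0$. An induced cycle $C=v_1\ldots v_nv_1$ ($n\geq 3$) in $\Phi(S)$ consists of distinct vertices with $v_iv_{i+1}$ and $v_nv_1$ adjacent and no other pair adjacent (multiplicities ignored); $|C|=n$. *)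

theory Defs
  imports Main
begin

definition simple_graph :: "'a set \<Rightarrow> ('a \<Rightarrow> 'a \<Rightarrow> bool) \<Rightarrow> bool" where
  "simple_graph V E \<longleftrightarrow> finite V \<and> (\<forall>u v. E u v \<longrightarrow> u \<in> V \<and> v \<in> V)
     \<and> (\<forall>u v. E u v \<longrightarrow> E v u) \<and> (\<forall>u. \<not> E u u)"

definition split_graph :: "'a set \<Rightarrow> ('a \<Rightarrow> 'a \<Rightarrow> bool) \<Rightarrow> 'a set \<Rightarrow> 'a set \<Rightarrow> bool" where
  "split_graph V E K I \<longleftrightarrow> simple_graph V E \<and> K \<union> I = V \<and> K \<inter> I = {}
     \<and> (\<forall>u\<in>K. \<forall>v\<in>K. u \<noteq> v \<longrightarrow> E u v)
     \<and> (\<forall>u\<in>I. \<forall>v\<in>I. \<not> E u v)"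

definition nbhd :: "'a set \<Rightarrow> ('a \<Rightarrow> 'a \<Rightarrow> bool) \<Rightarrow> 'a \<Rightarrow> 'a set" where
  "nbhd V E v = {u \<in> V. E v u}"

definition deg :: "'a set \<Rightarrow> ('a \<Rightarrow> 'a \<Rightarrow> bool) \<Rightarrow> 'a \<Rightarrow> nat" where
  "deg V E v = card (nbhd V E v)"

definition eta :: "'a set \<Rightarrow> ('a \<Rightarrow> 'a \<Rightarrow> bool) \<Rightarrow> 'a \<Rightarrow> 'a \<Rightarrow> nat" where
  "eta V E u v = card (nbhd V E u \<inter> nbhd V E v)"

text \<open>Multiplicity of the edge uv of the factor graph: sigma_uv = (d_u - eta_uv)(d_v - eta_uv).\<close>
definition sigma :: "'a set \<Rightarrow> ('a \<Rightarrow> 'a \<Rightarrow> bool) \<Rightarrow> 'a \<Rightarrow> 'a \<Rightarrow> nat" where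
  "sigma V E u v = (deg V E u - eta V E u v) * (deg V E v - eta V E u v)"

definition factor_adj :: "'a set \<Rightarrow> ('a \<Rightarrow> 'a \<Rightarrow> bool) \<Rightarrow> 'a set \<Rightarrow> 'a \<Rightarrow> 'a \<Rightarrow> bool" where
  "factor_adj V E I u v \<longleftrightarrow> u \<in> I \<and> v \<in> I \<and> u \<noteq> v \<and> sigma V E u v > 0"

definition induced_cycle :: "'a set \<Rightarrow> ('a \<Rightarrow> 'a \<Rightarrow> bool) \<Rightarrow> 'a list \<Rightarrow> bool" where
  "induced_cycle W A cs \<longleftrightarrow> length cs \<ge> 3 \<and> distinct cs \<and> set cs \<subseteq> W
     \<and> (\<forall>i < length cs. \<forall>j < length cs. i \<noteq> j \<longrightarrow>
          (A (cs ! i) (cs ! j) \<longleftrightarrow> (j = Suc i mod length cs \<or> i = Suc j mod length cs)))"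

end

theory Submission
  imports Defs
begin

lemma cyc_abstract1:
  fixes g :: "nat \<Rightarrow> 'b set"
  assumes fin: "\<And>i. finite (g i)" and per: "\<And>i. g (i+n) = g i" and n: "n>0"
  and inc: "\<And>i. \<not> g i \<subseteq> g (Suc i) \<and> \<not> g (Suc i) \<subseteq> g i"
  and c2: "\<And>i. g i \<subseteq> g (i+2) \<or> g (i+2) \<subseteq> g i"
  and c3: "\<And>i. g i \<subseteq> g (i+3) \<or> g (i+3) \<subseteq> g i"
  and start: "g 0 \<subseteq> g 2"
  shows False
proof -
  have P: "g i \<subseteq> g (i+2)" for i
  proof (induction i)
    case 0 thus ?case using start by (metis add_0)
  next
    case (Suc i)
    have a: "Suc (i+2) = i+3" "Suc i + 2 = Suc (i+2)" by simp_all
    have "\<not> g i \<subseteq> g (Suc i)" using inc[of i] by blast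
    moreover have "\<not> g (i+3) \<subseteq> g (i+2)" using inc[of "i+2"] unfolding a(1) by blast
    moreover have "g i \<subseteq> g (i+3) \<or> g (i+3) \<subseteq> g i" by (rule c3)
    moreover have "g (Suc i) \<subseteq> g (i+3) \<or> g (i+3) \<subseteq> g (Suc i)" using c2[of "Suc i"] unfolding a by blast
    ultimately show ?case using Suc.IH unfolding a by blast
  qed
  have Q: "g i \<subseteq> g (i+3)" for i
  proof -
    have "\<not> g (i+3) \<subseteq> g (i+2)" using inc[of "i+2"] by (simp add: numeral_eq_Suc)
    thus ?thesis using P[of i] c3[of i] by blast
  qed
  have perk: "g (i + k*n) = g i" for i k
    by (induction k) (simp_all, metis per add.assoc add.commute)
  have pm: "g j = g (j mod n)" for j
    using perk[of "j mod n" "j div n"] by (simp add: mod_div_mult_eq)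
  define M where "M = Max ((\<lambda>j. card (g j)) ` {..<n})"
  have "M \<in> (\<lambda>j. card (g j)) ` {..<n}" unfolding M_def using n by (intro Max_in) auto
  then obtain m where m: "m < n" "card (g m) = M" by auto
  have le: "card (g j) \<le> card (g m)" for j
  proof -
    have "card (g (j mod n)) \<le> M" unfolding M_def using n by (intro Max_ge) auto
    thus ?thesis using pm[of j] m by simp
  qed
  have eq: "g m = g (m+2)"
    using P[of m] le[of "m+2"] fin[of "m+2"] card_seteq by blast
  have "g (m+n-1) \<subseteq> g (m+n-1+3)" by (rule Q)
  moreover have "m+n-1+3 = (m+2)+n" using n by simp
  ultimately have "g (m+n-1) \<subseteq> g (m+n)" using per[of "m+2"] per[of m] eq by simp
  moreover have "Suc (m+n-1) = m+n" using n by simp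
  ultimately show False using inc[of "m+n-1"] by simp
qed

lemma cyc_abstract:
  fixes g :: "nat \<Rightarrow> 'b set"
  assumes sub: "\<And>i. g i \<subseteq> U" and finU: "finite U" and per: "\<And>i. g (i+n) = g i" and n: "n>0"
  and inc: "\<And>i. \<not> g i \<subseteq> g (Suc i) \<and> \<not> g (Suc i) \<subseteq> g i"
  and c2: "\<And>i. g i \<subseteq> g (i+2) \<or> g (i+2) \<subseteq> g i"
  and c3: "\<And>i. g i \<subseteq> g (i+3) \<or> g (i+3) \<subseteq> g i"
  shows False
proof (cases "g 0 \<subseteq> g 2")
  case True
  show False
    by (rule cyc_abstract1[of g n, OF _ per n inc c2 c3 True]) (use sub finU finite_subset in blast)
next
  case False
  define h where "h i = U - g i" for i
  have iff: "h i \<subseteq> h j \<longleftrightarrow> g j \<subseteq> g i" for i j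
    unfolding h_def using sub[of i] sub[of j] by blast
  show False
  proof (rule cyc_abstract1[of h n])
    show "finite (h i)" for i unfolding h_def using finU by simp
    show "h (i+n) = h i" for i unfolding h_def using per by simp
    show "\<not> h i \<subseteq> h (Suc i) \<and> \<not> h (Suc i) \<subseteq> h i" for i using inc[of i] iff by blast
    show "h i \<subseteq> h (i+2) \<or> h (i+2) \<subseteq> h i" for i using c2[of i] iff by blast
    show "h i \<subseteq> h (i+3) \<or> h (i+3) \<subseteq> h i" for i using c3[of i] iff by blast
    show "h 0 \<subseteq> h 2" using iff[of 0 2] c2[of 0] False by (metis add_0)
  qed (rule n)
qed


lemma modfacts0:
  fixes n a d :: nat
  assumes n: "n \<ge> 5" and d: "d = 2 \<or> d = 3" and a: "a < n"
  shows "a \<noteq> (a+d) mod n \<and> (a+d) mod n \<noteq> Suc a mod n \<and> a \<noteq> Suc ((a+d) mod n) mod n"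
proof (cases "a + d < n")
    case True
    have 1: "(a+d) mod n = a+d" using True by simp
    have "Suc a < n" using True d by auto
    hence 2: "Suc a mod n = Suc a" by simp
    have 3: "Suc (a+d) mod n = (if Suc (a+d) < n then Suc (a+d) else 0)"
      using True by (simp add: mod_Suc)
    show ?thesis unfolding 1 2 3 using d n True by auto
  next
    case False
    have "a+d-n < n" using a d n by auto
    hence 1: "(a+d) mod n = a+d-n" using False by (simp add: le_mod_geq)
    have "Suc (a+d-n) < n" using a d n by auto
    hence 3: "Suc (a+d-n) mod n = Suc (a+d-n)" by simp
    have 2: "Suc a mod n = (if Suc a < n then Suc a else 0)" using a by (simp add: mod_Suc)
    show ?thesis unfolding 1 2 3 using d n False a by auto
qed
lemma modfacts:
  fixes n i d :: nat
  assumes n: "n \<ge> 5" and d: "d = 2 \<or> d = 3"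
  shows "i mod n \<noteq> (i+d) mod n \<and> (i+d) mod n \<noteq> Suc (i mod n) mod n \<and> i mod n \<noteq> Suc ((i+d) mod n) mod n"
proof -
  have b: "(i+d) mod n = (i mod n+d) mod n" by (simp add: mod_add_left_eq)
  show ?thesis unfolding b using modfacts0[OF n d, of "i mod n"] n by simp
qed

lemma nb_finite: "split_graph V E K I \<Longrightarrow> finite (nbhd V E u)"
  unfolding split_graph_def simple_graph_def nbhd_def by auto

lemma nb_sub: "nbhd V E u \<subseteq> V"
  unfolding nbhd_def by auto

lemma diff_pos: "finite A \<Longrightarrow> (card A - card (A \<inter> B) > 0) \<longleftrightarrow> \<not> A \<subseteq> B"
proof -
  assume f: "finite A"
  have "card (A \<inter> B) \<le> card A" using f by (simp add: card_mono)
  moreover have "card (A \<inter> B) = card A \<longleftrightarrow> A \<subseteq> B"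
    using f by (metis Int_lower1 card_subset_eq inf.orderE le_iff_inf)
  ultimately show ?thesis by auto
qed

lemma adj_iff:
  assumes "split_graph V E K I"
  shows "factor_adj V E I u v \<longleftrightarrow> u \<in> I \<and> v \<in> I \<and> u \<noteq> v \<and>
     \<not> nbhd V E u \<subseteq> nbhd V E v \<and> \<not> nbhd V E v \<subseteq> nbhd V E u"
proof -
  have fu: "finite (nbhd V E u)" and fv: "finite (nbhd V E v)" using nb_finite[OF assms] by auto
  have "sigma V E u v > 0 \<longleftrightarrow> \<not> nbhd V E u \<subseteq> nbhd V E v \<and> \<not> nbhd V E v \<subseteq> nbhd V E u"
    unfolding sigma_def deg_def eta_def
    using diff_pos[OF fu, of "nbhd V E v"] diff_pos[OF fv, of "nbhd V E u"]
    by (simp add: Int_commute)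
  thus ?thesis unfolding factor_adj_def by blast
qed

theorem theorem3p3:
  fixes V :: "'a set" and E :: "'a \<Rightarrow> 'a \<Rightarrow> bool" and K I :: "'a set" and cs :: "'a list"
  assumes "split_graph V E K I"
    and "induced_cycle I (factor_adj V E I) cs"
  shows "length cs \<le> 4"
proof (rule ccontr)
  assume "\<not> length cs \<le> 4"
  define n where "n = length cs"
  have n5: "n \<ge> 5" using \<open>\<not> length cs \<le> 4\<close> n_def by simp
  have dist: "distinct cs" and sI: "set cs \<subseteq> I"
    and cyc: "\<And>i j. i < n \<Longrightarrow> j < n \<Longrightarrow> i \<noteq> j \<Longrightarrow>
          (factor_adj V E I (cs ! i) (cs ! j) \<longleftrightarrow> (j = Suc i mod n \<or> i = Suc j mod n))"
    using assms(2) unfolding induced_cycle_def n_def by auto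
  have inI: "i < n \<Longrightarrow> cs ! i \<in> I" for i using sI n_def by auto
  have neq: "i < n \<Longrightarrow> j < n \<Longrightarrow> i \<noteq> j \<Longrightarrow> cs ! i \<noteq> cs ! j" for i j
    using dist n_def by (simp add: nth_eq_iff_index_eq)
  define g where "g i = nbhd V E (cs ! (i mod n))" for i
  have comp: "g i \<subseteq> g (i+d) \<or> g (i+d) \<subseteq> g i" if d: "d = 2 \<or> d = 3" for i d
  proof -
    let ?a = "i mod n" and ?b = "(i+d) mod n"
    have ab: "?a < n" "?b < n" using n5 by auto
    have m: "?a \<noteq> ?b" "\<not> (?b = Suc ?a mod n \<or> ?a = Suc ?b mod n)" using modfacts[OF n5 d, of i] by auto
    have "\<not> factor_adj V E I (cs ! ?a) (cs ! ?b)" using cyc[OF ab m(1)] m(2) by blast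
    thus ?thesis unfolding g_def using adj_iff[OF assms(1)] inI[OF ab(1)] inI[OF ab(2)] neq[OF ab m(1)] by blast
  qed
  show False
  proof (rule cyc_abstract[of g V n])
    show "g i \<subseteq> V" for i unfolding g_def by (rule nb_sub)
    show "finite V" using assms(1) unfolding split_graph_def simple_graph_def by auto
    show "g (i + n) = g i" for i unfolding g_def by simp
    show "0 < n" using n5 by simp
    show "g i \<subseteq> g (i+2) \<or> g (i+2) \<subseteq> g i" for i using comp[of 2 i] by blast
    show "g i \<subseteq> g (i+3) \<or> g (i+3) \<subseteq> g i" for i using comp[of 3 i] by blast
    show "\<not> g i \<subseteq> g (Suc i) \<and> \<not> g (Suc i) \<subseteq> g i" for i
    proof -
      let ?a = "i mod n" and ?b = "Suc i mod n"
      have ab: "?a < n" "?b < n" using n5 by auto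
      have bb: "?b = Suc ?a mod n" by (simp add: mod_Suc_eq)
      have m: "?a \<noteq> ?b" using n5 unfolding bb by (auto simp: mod_Suc)
      have "factor_adj V E I (cs ! ?a) (cs ! ?b)" using cyc[OF ab m] bb by blast
      thus ?thesis unfolding g_def using adj_iff[OF assms(1)] by blast
    qed
  qed
qed

end
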